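(* Consider the network Polya contagion process on the complete graph on $N$ nodes with $\Delta_{r,i}(t)=\Delta_{b,i}(t)=\Delta>0$ for all nodes $i$ and times $t$. Let $\rho=\frac{\sum_{k=1}^N R_k}{\sum_{k=1}^N T_k}$. Then for every node $i$, every $n\ge 1$ and every $a\in\{0,1\}$, \[ P(Z_{i,n}=a)=\rho^a(1-\rho)^{1-a}. \]
   Context: Network Polya contagion process: $\mathcal{G}=(V,\mathcal{E})$ is a connected undirected graph, $V=\{1,\dots,N\}$, $\mathcal{N}_i'=\{i\}\cup\{v:(i,v)\in\mathcal{E}\}$; the complete graph has $\mathcal{N}_i'=V$ for all $i$. Each node $i$ has an urn initially containing $R_i\in\mathbb{Z}_{>0}$ red and $B_i\in\mathbb{Z}_{>0}$ black balls, $T_i=R_i+B_i$. The super urn of node $i$ is the union of the urns of nodes in $\mathcal{N}_i'$. At each time $t=1,2,\dots$ every node $i$ simultaneously draws from its super urn; $Z_{i,t}=1$ if red, $0$ if black; then $\Delta_{r,i}(t)$ red balls (if red drawn) or $\Delta_{b,i}(t)$ black balls (if black drawn) are added to node $i$'s own urn. Given the whole history, the time-$n$ draws are conditionally independent with $P(Z_{i,n}=1\mid\{Z_j^{n-1}\}_{j=1}^N)=\dfrac{\sum_{j\in\mathcal{N}_i'}\big(R_j+\sum_{t=1}^{n-1}Z_{j,t}\Delta_{r,j}(t)\big)}{\sum_{j\in\mathcal{N}_i'}\big(T_j+\sum_{t=1}^{n-1}(Z_{j,t}\Delta_{r,j}(t)+(1-Z_{j,t})\Delta_{b,j}(t))\big)}$.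 *)

theory Defs
  imports "HOL-Probability.Probability"
begin

text \<open>Nb i is the closed neighbourhood N'_i of node i.
  A history of length m is a list h of draw vectors; h ! (t-1) j is Z_{j,t}
  (True = red).  Drawing-scheme increments: Dr j t and Db j t (time t \<ge> 1).\<close>

definition red_balls ::
  "(nat \<Rightarrow> nat) \<Rightarrow> (nat \<Rightarrow> nat \<Rightarrow> real) \<Rightarrow> (nat \<Rightarrow> bool) list \<Rightarrow> nat \<Rightarrow> real" where
  "red_balls R Dr h j =
     real (R j) + (\<Sum>t<length h. if (h ! t) j then Dr j (Suc t) else 0)"

definition total_balls ::
  "(nat \<Rightarrow> nat) \<Rightarrow> (nat \<Rightarrow> nat) \<Rightarrow> (nat \<Rightarrow> nat \<Rightarrow> real) \<Rightarrow> (nat \<Rightarrow> nat \<Rightarrow> real)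
     \<Rightarrow> (nat \<Rightarrow> bool) list \<Rightarrow> nat \<Rightarrow> real" where
  "total_balls R B Dr Db h j =
     real (R j + B j) + (\<Sum>t<length h. if (h ! t) j then Dr j (Suc t) else Db j (Suc t))"

definition red_prob ::
  "(nat \<Rightarrow> nat set) \<Rightarrow> (nat \<Rightarrow> nat) \<Rightarrow> (nat \<Rightarrow> nat) \<Rightarrow> (nat \<Rightarrow> nat \<Rightarrow> real)
     \<Rightarrow> (nat \<Rightarrow> nat \<Rightarrow> real) \<Rightarrow> (nat \<Rightarrow> bool) list \<Rightarrow> nat \<Rightarrow> real" where
  "red_prob Nb R B Dr Db h i =
     (\<Sum>j\<in>Nb i. red_balls R Dr h j) / (\<Sum>j\<in>Nb i. total_balls R B Dr Db h j)"

primrec polya_hist ::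
  "nat \<Rightarrow> (nat \<Rightarrow> nat set) \<Rightarrow> (nat \<Rightarrow> nat) \<Rightarrow> (nat \<Rightarrow> nat) \<Rightarrow> (nat \<Rightarrow> nat \<Rightarrow> real)
     \<Rightarrow> (nat \<Rightarrow> nat \<Rightarrow> real) \<Rightarrow> nat \<Rightarrow> (nat \<Rightarrow> bool) list pmf" where
  "polya_hist N Nb R B Dr Db 0 = return_pmf []"
| "polya_hist N Nb R B Dr Db (Suc n) =
     do { h \<leftarrow> polya_hist N Nb R B Dr Db n;
          z \<leftarrow> Pi_pmf {1..N} False (\<lambda>i. bernoulli_pmf (red_prob Nb R B Dr Db h i));
          return_pmf (h @ [z]) }"

end

theory Submission
  imports Defs
begin

lemma exp_bind_fin:
  fixes h :: "'b \<Rightarrow> real"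
  assumes "finite (set_pmf p)" "\<And>x. x \<in> set_pmf p \<Longrightarrow> finite (set_pmf (f x))"
  shows "measure_pmf.expectation (p \<bind> f) h =
         measure_pmf.expectation p (\<lambda>a. measure_pmf.expectation (f a) h)"
  apply (subst pmf_expectation_bind[OF assms(1) assms(2) subset_refl])
   apply assumption
  apply (subst integral_measure_pmf[OF assms(1)])
  apply auto
  done

lemma exp_cong:
  fixes f g :: "'a \<Rightarrow> real"
  assumes "\<And>x. x \<in> set_pmf p \<Longrightarrow> f x = g x"
  shows "measure_pmf.expectation p f = measure_pmf.expectation p g"
  by (rule integral_cong_AE) (auto intro!: AE_pmfI simp: assms)

lemma fin_Pi: "finite (set_pmf (Pi_pmf {1..N::nat} False (q :: nat \<Rightarrow> bool pmf)))"
  by (subst set_Pi_pmf) auto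

lemma fin_PiA: "finite A \<Longrightarrow> finite (set_pmf (Pi_pmf A d (q :: 'a \<Rightarrow> bool pmf)))"
  by (subst set_Pi_pmf) auto

lemma fin_hist: "finite (set_pmf (polya_hist N Nb R B Dr Db n))"
proof (induction n)
  case 0 then show ?case by simp
next
  case (Suc n)
  show ?case
    using Suc fin_Pi by (auto simp: set_bind_pmf)
qed

lemma len_hist: "h \<in> set_pmf (polya_hist N Nb R B Dr Db n) \<Longrightarrow> length h = n"
  by (induction n arbitrary: h) (auto simp: set_bind_pmf)

lemma red_snoc: "red_balls R (\<lambda>_ _. D) (h @ [z]) j = red_balls R (\<lambda>_ _. D) h j + (if z j then D else 0)"
  by (simp add: red_balls_def nth_append)

lemma tot_snoc: "total_balls R B (\<lambda>_ _. D) (\<lambda>_ _. D) (h @ [z]) j = total_balls R B (\<lambda>_ _. D) (\<lambda>_ _. D) h j + D"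
  by (simp add: total_balls_def nth_append algebra_simps)

lemma tot_ge: "D \<ge> 0 \<Longrightarrow> total_balls R B (\<lambda>_ _. D) (\<lambda>_ _. D) h j \<ge> real (R j + B j)"
  unfolding total_balls_def by (auto intro!: sum_nonneg)

lemma red_le: "D \<ge> 0 \<Longrightarrow> red_balls R (\<lambda>_ _. D) h j \<le> total_balls R B (\<lambda>_ _. D) (\<lambda>_ _. D) h j"
  unfolding total_balls_def red_balls_def
  by (rule add_mono, simp, rule sum_mono, auto)

lemma red_ge: "D \<ge> 0 \<Longrightarrow> red_balls R (\<lambda>_ _. D) h j \<ge> 0"
  unfolding red_balls_def by (rule add_nonneg_nonneg, simp, rule sum_nonneg, auto)


definition Sr :: "nat \<Rightarrow> (nat \<Rightarrow> nat) \<Rightarrow> real \<Rightarrow> (nat \<Rightarrow> bool) list \<Rightarrow> real" where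
  "Sr N R D h = (\<Sum>j\<in>{1..N}. red_balls R (\<lambda>_ _. D) h j)"

definition Tt :: "nat \<Rightarrow> (nat \<Rightarrow> nat) \<Rightarrow> (nat \<Rightarrow> nat) \<Rightarrow> real \<Rightarrow> (nat \<Rightarrow> bool) list \<Rightarrow> real" where
  "Tt N R B D h = (\<Sum>j\<in>{1..N}. total_balls R B (\<lambda>_ _. D) (\<lambda>_ _. D) h j)"

lemma Sr_snoc: "Sr N R D (h @ [z]) = Sr N R D h + D * (\<Sum>j\<in>{1..N}. if z j then 1 else 0)"
  unfolding Sr_def red_snoc sum.distrib sum_distrib_left
  by (auto intro!: sum.cong)

lemma Tt_snoc: "Tt N R B D (h @ [z]) = Tt N R B D h + real N * D"
  unfolding Tt_def tot_snoc sum.distrib by simp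

lemma Tt_pos:
  assumes "N \<ge> 1" "\<forall>k\<in>{1..N}. R k > 0" "D \<ge> 0"
  shows "Tt N R B D h > 0"
proof -
  have "0 < (\<Sum>j\<in>{1..N}. real (R j + B j))"
    using assms by (intro sum_pos) (auto simp: add_pos_nonneg)
  also have "\<dots> \<le> Tt N R B D h"
    unfolding Tt_def using assms by (intro sum_mono tot_ge) auto
  finally show ?thesis .
qed

lemma Sr_ge: "D \<ge> 0 \<Longrightarrow> Sr N R D h \<ge> 0"
  unfolding Sr_def by (intro sum_nonneg red_ge)

lemma Sr_le: "D \<ge> 0 \<Longrightarrow> Sr N R D h \<le> Tt N R B D h"
  unfolding Sr_def Tt_def by (intro sum_mono red_le)

lemma q01:
  assumes "N \<ge> 1" "\<forall>k\<in>{1..N}. R k > 0" "D \<ge> 0"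
  shows "0 \<le> Sr N R D h / Tt N R B D h" "Sr N R D h / Tt N R B D h \<le> 1"
  using Tt_pos[OF assms, of B h] Sr_ge[OF assms(3), of N R h] Sr_le[OF assms(3), of N R h B]
  by auto

lemma rp_eq: "red_prob (\<lambda>_. {1..N}) R B (\<lambda>_ _. D) (\<lambda>_ _. D) h i = Sr N R D h / Tt N R B D h"
  unfolding red_prob_def Sr_def Tt_def ..

lemma step:
  fixes h :: "(nat \<Rightarrow> bool) list" and B :: "nat \<Rightarrow> nat"
  assumes "N \<ge> 1" "\<forall>k\<in>{1..N}. R k > 0" "D \<ge> 0"
  defines "p \<equiv> Sr N R D h / Tt N R B D h"
  shows "measure_pmf.expectation (Pi_pmf {1..N} False (\<lambda>i. bernoulli_pmf p))
           (\<lambda>z. Sr N R D (h @ [z]) / Tt N R B D (h @ [z])) = p"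
proof -
  let ?M = "Pi_pmf {1..N} False (\<lambda>i. bernoulli_pmf p)"
  let ?T = "Tt N R B D h + real N * D"
  have p01: "0 \<le> p" "p \<le> 1" unfolding p_def using q01[OF assms(1-3)] by auto
  have T: "Tt N R B D h > 0" using Tt_pos[OF assms(1-3)] .
  have int: "integrable ?M f" for f :: "_ \<Rightarrow> real"
    by (rule integrable_measure_pmf_finite[OF fin_Pi])
  have "measure_pmf.expectation ?M (\<lambda>z. Sr N R D (h @ [z]) / Tt N R B D (h @ [z]))
      = measure_pmf.expectation ?M (\<lambda>z. Sr N R D h / ?T + D / ?T * (\<Sum>j\<in>{1..N}. if z j then 1 else 0))"
    unfolding Sr_snoc Tt_snoc by (simp add: add_divide_distrib)
  also have "\<dots> = Sr N R D h / ?T + D / ?T * measure_pmf.expectation ?M (\<lambda>z. (\<Sum>j\<in>{1..N}. if z j then 1 else 0))"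
    by (subst Bochner_Integration.integral_add[OF int int]) simp
  also have "measure_pmf.expectation ?M (\<lambda>z. (\<Sum>j\<in>{1..N}. if z j then 1 else (0::real))) = real N * p"
  proof -
    have "measure_pmf.expectation ?M (\<lambda>z. (\<Sum>j\<in>{1..N}. if z j then 1 else (0::real)))
       = (\<Sum>j\<in>{1..N}. measure_pmf.expectation ?M (\<lambda>z. if z j then 1 else (0::real)))"
      by (rule Bochner_Integration.integral_sum) (rule int)
    also have "\<dots> = (\<Sum>j\<in>{1..N}. measure_pmf.expectation (map_pmf (\<lambda>z. z j) ?M) (\<lambda>b. if b then 1 else (0::real)))"
      by simp
    also have "\<dots> = (\<Sum>j\<in>{1..N}. p)"
      by (intro sum.cong refl, subst Pi_pmf_component) (use p01 in auto)
    finally show ?thesis by simp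
  qed
  also have "Sr N R D h / ?T + D / ?T * (real N * p) = p"
  proof -
    have T2: "?T > 0" using T assms(3) by (simp add: add_pos_nonneg)
    have "Sr N R D h / ?T + D / ?T * (real N * p) = (Sr N R D h + D * real N * p) / ?T"
      by (simp add: add_divide_distrib)
    also have "Sr N R D h + D * real N * p = p * ?T"
      using T unfolding p_def by (simp add: field_simps)
    finally show ?thesis using T2 by simp
  qed
  finally show ?thesis .
qed


lemma mart:
  assumes "N \<ge> 1" "\<forall>k\<in>{1..N}. R k > 0" "D \<ge> 0"
  shows "measure_pmf.expectation (polya_hist N (\<lambda>_. {1..N}) R B (\<lambda>_ _. D) (\<lambda>_ _. D) n)
           (\<lambda>h. Sr N R D h / Tt N R B D h) = Sr N R D [] / Tt N R B D []"
proof (induction n)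
  case 0 then show ?case by simp
next
  case (Suc n)
  let ?M = "polya_hist N (\<lambda>_. {1..N}) R B (\<lambda>_ _. D) (\<lambda>_ _. D) n"
  have "measure_pmf.expectation (polya_hist N (\<lambda>_. {1..N}) R B (\<lambda>_ _. D) (\<lambda>_ _. D) (Suc n))
           (\<lambda>h. Sr N R D h / Tt N R B D h)
      = measure_pmf.expectation ?M (\<lambda>h. measure_pmf.expectation
           (Pi_pmf {1..N} False (\<lambda>i. bernoulli_pmf (Sr N R D h / Tt N R B D h)) \<bind> (\<lambda>z. return_pmf (h @ [z])))
           (\<lambda>h. Sr N R D h / Tt N R B D h))"
    by (simp only: polya_hist.simps rp_eq, rule exp_bind_fin) (auto simp: fin_hist set_bind_pmf intro!: finite_UN_I fin_PiA)
  also have "\<dots> = measure_pmf.expectation ?M (\<lambda>h. Sr N R D h / Tt N R B D h)"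
  proof (rule exp_cong)
    fix h
    show "measure_pmf.expectation
           (Pi_pmf {1..N} False (\<lambda>i. bernoulli_pmf (Sr N R D h / Tt N R B D h)) \<bind> (\<lambda>z. return_pmf (h @ [z])))
           (\<lambda>h. Sr N R D h / Tt N R B D h) = Sr N R D h / Tt N R B D h"
      by (subst exp_bind_fin[OF fin_Pi]) (simp_all del: One_nat_def add: step[OF assms])
  qed
  finally show ?case using Suc by simp
qed

theorem lemma1:
  fixes N :: nat and R B :: "nat \<Rightarrow> nat" and \<Delta> :: real
    and i n a :: nat
  assumes "N \<ge> 1"
    and "\<forall>k\<in>{1..N}. R k > 0"
    and "\<forall>k\<in>{1..N}. B k > 0"
    and "\<Delta> > 0"
    and "i \<in> {1..N}" and "n \<ge> 1" and "a \<in> {0, 1}"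
  shows "(let \<rho> = (\<Sum>k=1..N. real (R k)) / (\<Sum>k=1..N. real (R k + B k)) in
          measure_pmf.prob (polya_hist N (\<lambda>_. {1..N}) R B (\<lambda>_ _. \<Delta>) (\<lambda>_ _. \<Delta>) n)
             {h. (h ! (n - 1)) i = (a = 1)}
          = \<rho> ^ a * (1 - \<rho>) ^ (1 - a))"
proof -
  obtain m where n: "n = Suc m" using assms(6) by (cases n) auto
  have D: "\<Delta> \<ge> 0" using assms(4) by simp
  define X where "X = {h. (h ! (n - 1)) i = (a = 1)}"
  define \<rho> where "\<rho> = (\<Sum>k=1..N. real (R k)) / (\<Sum>k=1..N. real (R k + B k))"
  have rho: "\<rho> = Sr N R \<Delta> [] / Tt N R B \<Delta> []"
    unfolding \<rho>_def Sr_def Tt_def red_balls_def total_balls_def by simp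
  let ?P = "polya_hist N (\<lambda>_. {1..N}) R B (\<lambda>_ _. \<Delta>) (\<lambda>_ _. \<Delta>)"
  let ?q = "\<lambda>h. Sr N R \<Delta> h / Tt N R B \<Delta> h"
  let ?g = "\<lambda>x::real. if a = 1 then x else 1 - x"
  have "measure_pmf.prob (?P n) X = measure_pmf.expectation (?P n) (indicator X)"
    by simp
  also have "\<dots> = measure_pmf.expectation (?P m) (\<lambda>h. measure_pmf.expectation
           (Pi_pmf {1..N} False (\<lambda>i. bernoulli_pmf (?q h)) \<bind> (\<lambda>z. return_pmf (h @ [z])))
           (indicator X :: _ \<Rightarrow> real))"
    unfolding n
    by (simp only: polya_hist.simps rp_eq, rule exp_bind_fin) (auto simp: fin_hist set_bind_pmf intro!: finite_UN_I fin_PiA)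
  also have "\<dots> = measure_pmf.expectation (?P m) (\<lambda>h. ?g (?q h))"
  proof (rule exp_cong)
    fix h assume h: "h \<in> set_pmf (?P m)"
    have len: "length h = m" using len_hist[OF h] .
    have q01': "0 \<le> ?q h" "?q h \<le> 1" using q01[OF assms(1,2) D] by auto
    have "measure_pmf.expectation
           (Pi_pmf {1..N} False (\<lambda>i. bernoulli_pmf (?q h)) \<bind> (\<lambda>z. return_pmf (h @ [z])))
           (indicator X :: _ \<Rightarrow> real)
        = measure_pmf.expectation (Pi_pmf {1..N} False (\<lambda>i. bernoulli_pmf (?q h)))
            (\<lambda>z. indicator X (h @ [z]) :: real)"
      by (rule trans[OF exp_bind_fin[OF fin_Pi]]) (simp_all del: One_nat_def)
    also have "\<dots> = measure_pmf.expectation (Pi_pmf {1..N} False (\<lambda>i. bernoulli_pmf (?q h)))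
            (\<lambda>z. (\<lambda>b. if b = (a = 1) then 1 else (0::real)) (z i))"
      by (rule exp_cong) (auto simp: X_def n len indicator_def nth_append)
    also have "\<dots> = measure_pmf.expectation (map_pmf (\<lambda>z. z i) (Pi_pmf {1..N} False (\<lambda>i. bernoulli_pmf (?q h))))
            (\<lambda>b. if b = (a = 1) then 1 else (0::real))"
      by simp
    also have "\<dots> = ?g (?q h)"
      by (subst Pi_pmf_component) (use q01' assms(5) in auto)
    finally show "measure_pmf.expectation
           (Pi_pmf {1..N} False (\<lambda>i. bernoulli_pmf (?q h)) \<bind> (\<lambda>z. return_pmf (h @ [z])))
           (indicator X :: _ \<Rightarrow> real) = ?g (?q h)" .
  qed
  also have "\<dots> = \<rho> ^ a * (1 - \<rho>) ^ (1 - a)"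
  proof (cases "a = 1")
    case True
    then show ?thesis using mart[OF assms(1,2) D, of B m] rho by simp
  next
    case False
    then have a0: "a = 0" using assms(7) by auto
    have int: "integrable (measure_pmf (?P m)) f" for f :: "_ \<Rightarrow> real"
      by (rule integrable_measure_pmf_finite[OF fin_hist])
    have "measure_pmf.expectation (?P m) (\<lambda>h. 1 - ?q h) = 1 - \<rho>"
      using mart[OF assms(1,2) D, of B m] rho
      by (subst Bochner_Integration.integral_diff[OF int int]) simp
    then show ?thesis using a0 by simp
  qed
  finally show ?thesis unfolding X_def \<rho>_def Let_def .
qed

end
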